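(* Let $z>0$, $\zeta=(z/2)^{1/3}$, and $V_0=\frac{5}{36z^2}-\frac{1}{4(z/2)^{2/3}}=\frac{5-36\zeta^4}{144\zeta^6}$. Let $a,c$ be nonzero constants and $A_{m,k}$ ($m,k\ge0$) the coefficients defined below. For $n\in\mathbb Z\setminus\{0\}$ with $\delta=\operatorname{sgn}(n)$ set $$\psi_n=\zeta^{1/2}e^{-\frac32\delta\zeta^2}\sum_{k=0}^{2|n|-2}A_{|n|-1,k}(\delta\zeta^2)^k,$$ and $\psi_0=0$. Then for all $n\ne0$, $$\frac{\mathrm d^2\psi_n}{\mathrm dz^2}+V_0\psi_n=-\delta\,a\,\psi_{n-\delta}.$$
   Context: The coefficients $A_{m,k}$, $m,k\in\mathbb Z_{\ge0}$ (set to $0$ if an index is negative), are determined by $A_{0,0}=c$, $A_{0,k}=0$ ($k\ge1$), and for $m\ge1$: $A_{m,0}=0$, $A_{m,2m}=\big(\tfrac{3a}{2}\big)^m\frac{c}{m!}$, $A_{m,k}=\frac{3a}{k}A_{m-1,k-2}+\frac{k+1}{3}A_{m,k+1}$ for $k\ge2$, and $A_{m,1}=\frac23A_{m,2}$ (with these conditions $A_{m,k}=0$ for $k>2m$). *)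

theory Defs
  imports "HOL-Analysis.Analysis"
begin

function Acoef :: "real \<Rightarrow> real \<Rightarrow> nat \<Rightarrow> nat \<Rightarrow> real" where
  "Acoef a c m k =
     (if m = 0 then (if k = 0 then c else 0)
      else if k = 0 then 0
      else if k > 2 * m then 0
      else if k = 2 * m then (3 * a / 2) ^ m * c / fact m
      else if k = 1 then 2 / 3 * Acoef a c m 2
      else 3 * a / real k * Acoef a c (m - 1) (k - 2)
           + (real k + 1) / 3 * Acoef a c m (k + 1))"
  by pat_completeness auto
termination
  by (relation "measures [\<lambda>(a, c, m, k). m, \<lambda>(a, c, m, k). 2 * m + 1 - k]") auto

definition zeta :: "real \<Rightarrow> real" where
  "zeta z = (z / 2) powr (1 / 3)"

definition V0 :: "real \<Rightarrow> real" where
  "V0 z = 5 / (36 * z ^ 2) - 1 / (4 * (z / 2) powr (2 / 3))"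

definition psi :: "real \<Rightarrow> real \<Rightarrow> int \<Rightarrow> real \<Rightarrow> real" where
  "psi a c n z =
     (if n = 0 then 0
      else (let \<delta> = real_of_int (sgn n); m = nat \<bar>n\<bar> - 1 in
            sqrt (zeta z) * exp (- 3 / 2 * \<delta> * (zeta z) ^ 2) *
            (\<Sum>k = 0..2 * m. Acoef a c m k * (\<delta> * (zeta z) ^ 2) ^ k)))"

end

theory Submission
  imports Defs "HOL-Computational_Algebra.Polynomial"
begin

declare Acoef.simps[simp del]

lemma A_simp0: "Acoef a c 0 k = (if k = 0 then c else 0)"
  by (subst Acoef.simps) simp

lemma A_big: "k > 2 * m \<Longrightarrow> Acoef a c m k = 0"
  by (subst Acoef.simps) auto

lemma A_top: "Acoef a c m (2 * m) = (3 * a / 2) ^ m * c / fact m"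
  by (subst Acoef.simps) auto

lemma A_one: "m > 0 \<Longrightarrow> Acoef a c m 1 = 2 / 3 * Acoef a c m 2"
  by (subst Acoef.simps) auto

lemma A_rec: "m > 0 \<Longrightarrow> 2 \<le> k \<Longrightarrow> k < 2 * m \<Longrightarrow>
  Acoef a c m k = 3 * a / real k * Acoef a c (m - 1) (k - 2) + (real k + 1) / 3 * Acoef a c m (k + 1)"
  by (subst Acoef.simps) auto

definition PP :: "real \<Rightarrow> real \<Rightarrow> nat \<Rightarrow> real poly" where
  "PP a c m = (\<Sum>k = 0..2*m. monom (Acoef a c m k) k)"

lemma coeff_PP: "coeff (PP a c m) j = Acoef a c m j"
proof -
  have "coeff (PP a c m) j = (\<Sum>k = 0..2*m. if k = j then Acoef a c m k else 0)"
    by (simp add: PP_def coeff_sum)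
  also have "\<dots> = (if j \<le> 2*m then Acoef a c m j else 0)"
    by (simp add: sum.delta)
  also have "\<dots> = Acoef a c m j" using A_big[of m j a c] by auto
  finally show ?thesis .
qed

lemma poly_PP: "poly (PP a c m) w = (\<Sum>k = 0..2*m. Acoef a c m k * w ^ k)"
  by (simp add: PP_def poly_sum poly_monom)

lemma coeff_id:
  assumes "m > 0"
  shows "real (j+2) * real (j+1) * Acoef a c m (j+2) - 3 * real (j+1) * Acoef a c m (j+1)
     = -9 * a * (if j = 0 then 0 else Acoef a c (m-1) (j-1))"
proof (cases "j = 0")
  case True then show ?thesis using A_one[OF assms, of a c] by (simp add: numeral_2_eq_2)
next
  case False
  define k where "k = j + 1"
  have k2: "k \<ge> 2" using False k_def by simp
  consider "k < 2*m" | "k = 2*m" | "k > 2*m" by linarith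
  then show ?thesis
  proof cases
    case 1
    have "Acoef a c m k = 3 * a / real k * Acoef a c (m - 1) (k - 2) + (real k + 1) / 3 * Acoef a c m (k + 1)"
      by (rule A_rec[OF assms k2 1])
    moreover have "k - 2 = j - 1" "k + 1 = j + 2" using k_def False by auto
    ultimately have r: "Acoef a c m (j+1) = 3 * a / real (j+1) * Acoef a c (m - 1) (j - 1) + (real (j+1) + 1) / 3 * Acoef a c m (j + 2)"
      using k_def by simp
    have pos: "real (j+1) > 0" by simp
    have "3 * real (j+1) * Acoef a c m (j+1) = 9 * a * Acoef a c (m - 1) (j - 1) + real (j+1) * (real (j+1) + 1) * Acoef a c m (j + 2)"
      unfolding r using pos by (simp add: field_simps)
    then show ?thesis using False by (simp add: algebra_simps)
  next
    case 2
    have e1: "Acoef a c m (j+2) = 0" using A_big[of m "j+2" a c] 2 k_def by simp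
    have e2: "Acoef a c m (j+1) = (3 * a / 2) ^ m * c / fact m" using A_top[of a c m] 2 k_def by simp
    have jm: "j - 1 = 2 * (m - 1)" using 2 k_def by simp
    have e3: "Acoef a c (m-1) (j-1) = (3 * a / 2) ^ (m-1) * c / fact (m-1)"
      using A_top[of a c "m-1"] jm by simp
    obtain p where p: "m = Suc p" using assms gr0_conv_Suc by blast
    have jj: "real (j+1) = 2 * real m" "real (j+2) = 2 * real m + 1" using 2 k_def by simp_all
    have f: "fact m = real m * fact (m-1)" using p by simp
    have "real (j+2) * real (j+1) * Acoef a c m (j+2) - 3 * real (j+1) * Acoef a c m (j+1)
       = - 6 * real m * ((3 * a / 2) ^ m * c / fact m)" unfolding e1 e2 jj by simp
    also have "\<dots> = -9 * a * ((3 * a / 2) ^ (m-1) * c / fact (m-1))"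
    proof -
      have pw: "(3 * a / 2) ^ m = (3 * a / 2) * (3 * a / 2) ^ (m-1)" using p by simp
      have mz: "real m \<noteq> 0" using assms by simp
      have fz: "fact (m-1) \<noteq> (0::real)" by simp
      show ?thesis unfolding f pw using mz fz by (simp add: field_simps)
    qed
    finally show ?thesis using False e3 by simp
  next
    case 3
    have e1: "Acoef a c m (j+2) = 0" using A_big[of m "j+2" a c] 3 k_def by simp
    have e2: "Acoef a c m (j+1) = 0" using A_big[of m "j+1" a c] 3 k_def by simp
    have e3: "Acoef a c (m-1) (j-1) = 0" using A_big[of "m-1" "j-1" a c] 3 k_def assms False by simp
    show ?thesis using False e1 e2 e3 by simp
  qed
qed

lemma poly_id:
  assumes "m > 0"
  shows "pderiv (pderiv (PP a c m)) - smult 3 (pderiv (PP a c m)) = smult (-9 * a) (pCons 0 (PP a c (m-1)))"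
proof (rule poly_eqI)
  fix j
  show "coeff (pderiv (pderiv (PP a c m)) - smult 3 (pderiv (PP a c m))) j =
        coeff (smult (-9 * a) (pCons 0 (PP a c (m-1)))) j"
    using coeff_id[OF assms, of j a c]
    by (cases j) (simp_all add: coeff_pderiv coeff_PP coeff_pCons' algebra_simps)
qed

lemma poly_id0: "pderiv (PP a c 0) = 0"
proof -
  have "PP a c 0 = [:c:]" by (simp add: PP_def A_simp0 monom_0)
  then show ?thesis by simp
qed


definition G :: "real \<Rightarrow> real \<Rightarrow> nat \<Rightarrow> real \<Rightarrow> real" where
  "G a c m w = exp (-3/2*w) * poly (PP a c m) w"
definition G1 :: "real \<Rightarrow> real \<Rightarrow> nat \<Rightarrow> real \<Rightarrow> real" where
  "G1 a c m w = exp (-3/2*w) * (poly (pderiv (PP a c m)) w - 3/2 * poly (PP a c m) w)"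
definition G2 :: "real \<Rightarrow> real \<Rightarrow> nat \<Rightarrow> real \<Rightarrow> real" where
  "G2 a c m w = exp (-3/2*w) * (poly (pderiv (pderiv (PP a c m))) w
      - 3 * poly (pderiv (PP a c m)) w + 9/4 * poly (PP a c m) w)"
definition Q :: "real \<Rightarrow> real \<Rightarrow> nat \<Rightarrow> real \<Rightarrow> real" where
  "Q a c m w = (if m = 0 then 0 else poly (PP a c (m-1)) w)"

lemma dexp: "((\<lambda>w. exp (-3/2*w)) has_real_derivative exp (-3/2*w) * (-3/2)) (at w)"
  by (auto intro!: derivative_eq_intros)

lemma dG: "(G a c m has_real_derivative G1 a c m w) (at w)"
proof -
  have "((\<lambda>w. exp (-3/2*w) * poly (PP a c m) w) has_real_derivative
     exp (-3/2*w) * (-3/2) * poly (PP a c m) w + poly (pderiv (PP a c m)) w * exp (-3/2*w)) (at w)"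
    by (rule DERIV_mult[OF dexp poly_DERIV])
  then show ?thesis unfolding G_def[abs_def] G1_def by (rule DERIV_cong) (simp add: algebra_simps)
qed

lemma dG1: "(G1 a c m has_real_derivative G2 a c m w) (at w)"
proof -
  have d: "((\<lambda>w. poly (pderiv (PP a c m)) w - 3/2 * poly (PP a c m) w) has_real_derivative
      poly (pderiv (pderiv (PP a c m))) w - 3/2 * poly (pderiv (PP a c m)) w) (at w)"
    by (intro DERIV_diff DERIV_cmult poly_DERIV)
  have "((\<lambda>w. exp (-3/2*w) * (poly (pderiv (PP a c m)) w - 3/2 * poly (PP a c m) w)) has_real_derivative
     exp (-3/2*w) * (-3/2) * (poly (pderiv (PP a c m)) w - 3/2 * poly (PP a c m) w)
     + (poly (pderiv (pderiv (PP a c m))) w - 3/2 * poly (pderiv (PP a c m)) w) * exp (-3/2*w)) (at w)"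
    by (rule DERIV_mult[OF dexp d])
  then show ?thesis unfolding G1_def[abs_def] G2_def by (rule DERIV_cong) (simp add: algebra_simps)
qed

lemma Gode: "G2 a c m w / 9 - G a c m w / 4 = - a * w * exp (-3/2*w) * Q a c m w"
proof (cases "m = 0")
  case True
  then show ?thesis by (simp add: G2_def G_def Q_def poly_id0)
next
  case False
  have "poly (pderiv (pderiv (PP a c m)) - smult 3 (pderiv (PP a c m))) w =
        poly (smult (-9 * a) (pCons 0 (PP a c (m-1)))) w" using poly_id[of m a c] False by simp
  then have e: "poly (pderiv (pderiv (PP a c m))) w
     = 3 * poly (pderiv (PP a c m)) w - 9 * a * w * poly (PP a c (m-1)) w" by (simp add: algebra_simps)
  show ?thesis using False unfolding G2_def G_def Q_def e by (simp add: field_simps)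
qed

lemma psi_rep:
  assumes "n \<noteq> 0" "t > 0"
  shows "psi a c n t = (t/2) powr (1/6) * G a c (nat \<bar>n\<bar> - 1) (real_of_int (sgn n) * (t/2) powr (2/3))"
proof -
  have x: "t/2 > 0" using assms by simp
  have s: "sqrt ((t/2) powr (1/3)) = (t/2) powr (1/6)"
    using x by (simp add: powr_half_sqrt[symmetric] powr_powr)
  have q: "((t/2) powr (1/3)) ^ 2 = (t/2) powr (2/3)"
    using x by (simp add: powr_power)
  show ?thesis using assms unfolding psi_def zeta_def Let_def G_def s q poly_PP
    by (simp add: algebra_simps)
qed

lemma psi_prev:
  assumes "n \<noteq> 0" "t > 0"
  shows "psi a c (n - sgn n) t = (t/2) powr (1/6) * exp (-3/2 * (real_of_int (sgn n) * (t/2) powr (2/3)))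
      * Q a c (nat \<bar>n\<bar> - 1) (real_of_int (sgn n) * (t/2) powr (2/3))"
proof (cases "nat \<bar>n\<bar> - 1 = 0")
  case True
  then have "n - sgn n = 0" using assms by (auto simp: sgn_if split: if_splits)
  then show ?thesis using True by (simp add: psi_def Q_def)
next
  case False
  have ne: "n - sgn n \<noteq> 0" and sg: "sgn (n - sgn n) = sgn n" and mm: "nat \<bar>n - sgn n\<bar> - 1 = nat \<bar>n\<bar> - 1 - 1"
    using False assms by (auto simp: sgn_if)
  show ?thesis unfolding psi_rep[OF ne assms(2)] sg mm using False by (simp add: Q_def G_def)
qed


lemma dpowc: "t > 0 \<Longrightarrow> ((\<lambda>t. (t/2) powr r) has_real_derivative r * ((t/2) powr r / (t/2)) * (1/2)) (at t)"
proof -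
  assume t: "t > 0"
  have "((\<lambda>t. (t/2) powr r) has_real_derivative r * (t/2) powr (r - of_nat 1) * (1/2)) (at t)"
    by (rule DERIV_fun_powr) (auto intro!: derivative_eq_intros simp: t)
  then show ?thesis using t by (simp add: powr_diff)
qed

lemma dGc: "(f has_real_derivative f') (at t) \<Longrightarrow>
   ((\<lambda>t. G a c m (f t)) has_real_derivative G1 a c m (f t) * f') (at t)"
  by (rule DERIV_chain2[OF dG])

lemma dG1c: "(f has_real_derivative f') (at t) \<Longrightarrow>
   ((\<lambda>t. G1 a c m (f t)) has_real_derivative G2 a c m (f t) * f') (at t)"
  by (rule DERIV_chain2[OF dG1])

lemma dF: fixes d :: real assumes t: "t > 0"
  shows "((\<lambda>t. (t/2) powr (1/6) * G a c m (d * (t/2) powr (2/3))) has_real_derivative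
     1/12 * ((t/2) powr (1/6) / (t/2)) * G a c m (d * (t/2) powr (2/3))
     + d/3 * ((t/2) powr (1/6) * (t/2) powr (2/3) / (t/2)) * G1 a c m (d * (t/2) powr (2/3))) (at t)"
  apply (rule DERIV_cong)
   apply (rule DERIV_mult dpowc[OF t] dGc DERIV_const)+
  apply (simp add: algebra_simps)
  done


lemma dD1: fixes d :: real assumes t: "t > 0" and d: "d = 1 \<or> d = -1"
  shows "((\<lambda>t. 1/12 * ((t/2) powr (1/6) / (t/2)) * G a c m (d * (t/2) powr (2/3))
     + d/3 * ((t/2) powr (1/6) * (t/2) powr (2/3) / (t/2)) * G1 a c m (d * (t/2) powr (2/3))) has_real_derivative
     - V0 t * ((t/2) powr (1/6) * G a c m (d * (t/2) powr (2/3)))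
     - d * a * ((t/2) powr (1/6) * exp (-3/2 * (d * (t/2) powr (2/3)))
      * Q a c m (d * (t/2) powr (2/3)))) (at t)"
  apply (rule DERIV_cong)
   apply ((rule DERIV_add DERIV_mult DERIV_divide dpowc[OF t] dGc dG1c DERIV_const DERIV_ident) | (insert t, simp; fail))+
  subgoal
  proof -
    obtain u where hu: "(t/2) powr (1/6) = u" by blast
    have x: "t/2 > 0" using t by simp
    have u0: "u > 0" using x hu by auto
    have h4: "(t/2) powr (2/3) = u^4" using x unfolding hu[symmetric] by (simp add: powr_power)
    have h6: "u^6 = t/2" using x unfolding hu[symmetric] by (simp add: powr_power)
    then have ht: "t = 2 * u^6" by simp
    have ode: "G2 a c m (d * u^4) = 9/4 * G a c m (d * u^4) - 9 * a * (d * u^4) * exp (-3/2 * (d * u^4)) * Q a c m (d * u^4)"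
      using Gode[of a c m "d * u^4"] by (simp add: field_simps)
    show ?thesis
      unfolding V0_def
      apply (simp only: hu h4)
      apply (simp only: ht)
      apply (simp only: ode)
      using d u0 apply (elim disjE)
      apply (simp_all add: field_simps)
      done
  qed
  done


theorem mainTheorem11:
  fixes a c :: real and n :: int and z :: real
  assumes "a \<noteq> 0" and "c \<noteq> 0" and "n \<noteq> 0" and "z > 0"
  shows "(\<forall>t>0. psi a c n differentiable (at t)) \<and>
         (deriv (psi a c n) has_real_derivative
            (- V0 z * psi a c n z - real_of_int (sgn n) * a * psi a c (n - sgn n) z)) (at z)"
proof -
  define d where "d = real_of_int (sgn n)"
  define m where "m = nat \<bar>n\<bar> - 1"
  have d: "d = 1 \<or> d = -1" using assms(3) by (auto simp: d_def sgn_if)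
  define D1 where "D1 = (\<lambda>t. 1/12 * ((t/2) powr (1/6) / (t/2)) * G a c m (d * (t/2) powr (2/3))
     + d/3 * ((t/2) powr (1/6) * (t/2) powr (2/3) / (t/2)) * G1 a c m (d * (t/2) powr (2/3)))"
  have eq: "\<And>x. x \<in> {0<..} \<Longrightarrow> (x/2) powr (1/6) * G a c m (d * (x/2) powr (2/3)) = psi a c n x"
    using psi_rep[OF assms(3)] unfolding d_def m_def by simp
  have dpsi: "(psi a c n has_real_derivative D1 t) (at t)" if t: "t > 0" for t
    apply (rule has_field_derivative_transform_within_open[where S="{0<..}"])
       apply (unfold D1_def, rule dF[OF t])
    using t eq by auto
  have dD: "(D1 has_real_derivative (- V0 z * psi a c n z - d * a * psi a c (n - sgn n) z)) (at z)"
    using dD1[OF assms(4) d, of a c m] unfolding D1_def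
      psi_rep[OF assms(3) assms(4)] psi_prev[OF assms(3) assms(4)] d_def[symmetric] m_def[symmetric] .
  have "(deriv (psi a c n) has_real_derivative (- V0 z * psi a c n z - d * a * psi a c (n - sgn n) z)) (at z)"
    apply (rule has_field_derivative_transform_within_open[OF dD, where S="{0<..}"])
    using assms(4) by (auto intro: DERIV_imp_deriv[symmetric] dpsi)
  moreover have "\<forall>t>0. psi a c n differentiable (at t)"
    using dpsi real_differentiable_def by blast
  ultimately show ?thesis unfolding d_def by blast
qed

end
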